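(* Let $0<\varepsilon\le1$, $\gamma>1$, $\Delta t>0$. Consider the first order semi-implicit (IMEX) time discretization of the Euler equations $U^{n+1}=U^n-\Delta t\,\nabla\cdot\hat F(U^n)-\Delta t\,\nabla\cdot\tilde F(U^{n+1})$, written as the explicit non-stiff step $$\widehat\rho=\rho^n-\Delta t\,\nabla\cdot(\rho\mathbf u)^n,\quad \widehat{\rho\mathbf u}=(\rho\mathbf u)^n-\Delta t\,\nabla\cdot(\rho\mathbf u\otimes\mathbf u+p\,\mathrm{Id})^n,\quad \widehat{\rho E}=(\rho E)^n-\Delta t\,\nabla\cdot\big((\rho E+\Pi)^n\mathbf u^n\big),$$ followed by the implicit stiff step $$\rho^{n+1}=\widehat\rho,\quad (\rho\mathbf u)^{n+1}=\widehat{\rho\mathbf u}-\frac{1-\varepsilon^2}{\varepsilon^2}\Delta t\,\nabla p^{n+1},\quad (\rho E)^{n+1}=\widehat{\rho E}-(1-\varepsilon^2)\Delta t\,\nabla\cdot\big((p-p_\infty)\mathbf u\big)^{n+1}.$$ Set $\widehat{\mathbf u}=\widehat{\rho\mathbf u}/\widehat\rho$ and $\widehat p=(\gamma-1)(\widehat{\rho E}-\frac{\varepsilon^2}{2}\widehat\rho\|\widehat{\mathbf u}\|^2)$. Then this scheme is equivalent to the explicit step above, the implicit mass and momentum updates above, and the nonlinear elliptic pressure equation $$-\frac{(1-\varepsilon^2)^2}{\varepsilon^2}\Delta t^2\,\nabla\cdot\Big(\frac{(p-p_\infty)^{n+1}}{\widehat\rho}\nabla p^{n+1}\Big)+\frac{p^{n+1}}{\gamma-1}=-\frac{(1-\varepsilon^2)^2}{2\varepsilon^2}\frac{\Delta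 t^2}{\widehat\rho}\|\nabla p^{n+1}\|^2-(1-\varepsilon^2)\Delta t\,(p-p_\infty)^{n+1}\nabla\cdot\widehat{\mathbf u}+\frac{\widehat p}{\gamma-1}.$$
   Context: Nondimensionalised Euler equations $U_t+\nabla\cdot F(U)=0$ in $\mathbb R^d$ with $U=(\rho,\rho\mathbf u,\rho E)$, $F(U)=(\rho\mathbf u,\rho\mathbf u\otimes\mathbf u+\frac{p}{\varepsilon^2}\mathrm{Id},(\rho E+p)\mathbf u)$, equation of state $p=(\gamma-1)(\rho E-\frac{\varepsilon^2}{2}\rho\|\mathbf u\|^2)$, reference Mach number $0<\varepsilon\le1$. Flux splitting $F=\hat F+\tilde F$ with $\hat F(U)=(\rho\mathbf u,\rho\mathbf u\otimes\mathbf u+p\,\mathrm{Id},(\rho E+\Pi)\mathbf u)$, $\tilde F(U)=(0,\frac{1-\varepsilon^2}{\varepsilon^2}p\,\mathrm{Id},(p-\Pi)\mathbf u)$, where $\Pi=\varepsilon^2p+(1-\varepsilon^2)p_\infty$ and the reference pressure is $p_\infty(t)=\inf_{\mathbf x}p(\mathbf x,t)$ (so $p-\Pi=(1-\varepsilon^2)(p-p_\infty)$). Superscripts $n$, $n+1$ denote time levels $t^n$, $t^{n+1}=t^n+\Delta t$. *)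

theory Defs
  imports "HOL-Analysis.Analysis"
begin

definition pdiff :: "(real^'d \<Rightarrow> 'b::real_normed_vector) \<Rightarrow> 'd \<Rightarrow> real^'d \<Rightarrow> 'b" where
  "pdiff f i x = frechet_derivative f (at x) (axis i 1)"

definition grad :: "(real^'d \<Rightarrow> real) \<Rightarrow> real^'d \<Rightarrow> real^'d" where
  "grad f x = (\<chi> i. pdiff f i x)"

definition divg :: "(real^'d \<Rightarrow> real^'d) \<Rightarrow> real^'d \<Rightarrow> real" where
  "divg F x = (\<Sum>i\<in>UNIV. pdiff F i x $ i)"

definition divT :: "(real^'d \<Rightarrow> real^'d^'d) \<Rightarrow> real^'d \<Rightarrow> real^'d" where
  "divT M x = (\<chi> j. \<Sum>i\<in>UNIV. pdiff M i x $ j $ i)"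

definition outer :: "real^'d \<Rightarrow> real^'d \<Rightarrow> real^'d^'d" where
  "outer u v = (\<chi> i j. u $ i * v $ j)"

definition twice_diff :: "('a::real_normed_vector \<Rightarrow> 'b::real_normed_vector) \<Rightarrow> bool" where
  "twice_diff f \<longleftrightarrow> (\<forall>x. f differentiable (at x)) \<and>
     (\<forall>v x. (\<lambda>y. frechet_derivative f (at y) v) differentiable (at x))"

text \<open>Primitive variables from conserved ones (rho, rho u, rho E).\<close>
definition vel :: "(real^'d \<Rightarrow> real) \<Rightarrow> (real^'d \<Rightarrow> real^'d) \<Rightarrow> real^'d \<Rightarrow> real^'d" where
  "vel rho m x = (1 / rho x) *\<^sub>R m x"

definition pres :: "real \<Rightarrow> real \<Rightarrow> (real^'d \<Rightarrow> real) \<Rightarrow> (real^'d \<Rightarrow> real^'d) \<Rightarrow> (real^'d \<Rightarrow> real)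
    \<Rightarrow> real^'d \<Rightarrow> real" where
  "pres \<gamma> \<epsilon> rho m E x = (\<gamma> - 1) * (E x - \<epsilon>\<^sup>2 / 2 * rho x * (norm (vel rho m x))\<^sup>2)"

definition pinf :: "(real^'d \<Rightarrow> real) \<Rightarrow> real" where
  "pinf p = Inf (range p)"

definition PiP :: "real \<Rightarrow> (real^'d \<Rightarrow> real) \<Rightarrow> real^'d \<Rightarrow> real" where
  "PiP \<epsilon> p x = \<epsilon>\<^sup>2 * p x + (1 - \<epsilon>\<^sup>2) * pinf p"

definition rho_hat :: "real \<Rightarrow> (real^'d \<Rightarrow> real) \<Rightarrow> (real^'d \<Rightarrow> real^'d) \<Rightarrow> real^'d \<Rightarrow> real" where
  "rho_hat dt rho m x = rho x - dt * divg m x"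

definition m_hat :: "real \<Rightarrow> real \<Rightarrow> real \<Rightarrow> (real^'d \<Rightarrow> real) \<Rightarrow> (real^'d \<Rightarrow> real^'d)
    \<Rightarrow> (real^'d \<Rightarrow> real) \<Rightarrow> real^'d \<Rightarrow> real^'d" where
  "m_hat \<gamma> \<epsilon> dt rho m E x = m x - dt *\<^sub>R
     divT (\<lambda>y. outer (m y) (vel rho m y) + pres \<gamma> \<epsilon> rho m E y *\<^sub>R mat 1) x"

definition E_hat :: "real \<Rightarrow> real \<Rightarrow> real \<Rightarrow> (real^'d \<Rightarrow> real) \<Rightarrow> (real^'d \<Rightarrow> real^'d)
    \<Rightarrow> (real^'d \<Rightarrow> real) \<Rightarrow> real^'d \<Rightarrow> real" where
  "E_hat \<gamma> \<epsilon> dt rho m E x = E x - dt *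
     divg (\<lambda>y. (E y + PiP \<epsilon> (pres \<gamma> \<epsilon> rho m E) y) *\<^sub>R vel rho m y) x"

end

theory Submission
  imports Defs
begin

lemma pres_alt:
  assumes "\<And>y. rho y \<noteq> 0"
  shows "pres \<gamma> \<epsilon> rho m E = (\<lambda>y. (\<gamma>-1)*(E y - \<epsilon>\<^sup>2/2*((m y \<bullet> m y)/rho y)))"
proof
  fix y
  have "rho y * (norm (vel rho m y))\<^sup>2 = (m y \<bullet> m y)/rho y"
  proof -
    have "(norm (vel rho m y))\<^sup>2 = (1/rho y)\<^sup>2 * (m y \<bullet> m y)"
      by (simp add: vel_def power_mult_distrib power_divide flip: power2_norm_eq_inner)
    then show ?thesis using assms[of y] by (simp add: power2_eq_square field_simps)
  qed
  then show "pres \<gamma> \<epsilon> rho m E y = (\<gamma>-1)*(E y - \<epsilon>\<^sup>2/2*((m y \<bullet> m y)/rho y))"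
    unfolding pres_def by (metis mult.assoc)
qed

lemma pres_deriv:
  fixes rho E :: "real^'d \<Rightarrow> real" and m :: "real^'d \<Rightarrow> real^'d"
  assumes "\<And>y. rho y \<noteq> 0" "\<And>y. rho differentiable at y" "\<And>y. m differentiable at y" "\<And>y. E differentiable at y"
  shows "(pres \<gamma> \<epsilon> rho m E has_derivative (\<lambda>h. (\<gamma>-1)*(frechet_derivative E (at y) h - \<epsilon>\<^sup>2/2*
     ((frechet_derivative m (at y) h \<bullet> m y + m y \<bullet> frechet_derivative m (at y) h) / rho y
      - (m y \<bullet> m y) * frechet_derivative rho (at y) h / (rho y)\<^sup>2)))) (at y)"
  unfolding pres_alt[OF assms(1)]
  using assms(2-4)[of y, unfolded frechet_derivative_works] assms(1)[of y]
  by (auto intro!: derivative_eq_intros simp: field_simps power2_eq_square)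

lemma pdiff_at: "(f has_derivative f') (at x) \<Longrightarrow> pdiff f i x = f' (axis i 1)"
  unfolding pdiff_def using frechet_derivative_at by metis

lemma divg_lin:
  fixes f g :: "real^'d \<Rightarrow> real^'d"
  assumes "f differentiable at x" "g differentiable at x"
  shows "divg (\<lambda>y. f y - c *\<^sub>R g y) x = divg f x - c * divg g x"
proof -
  have "((\<lambda>y. f y - c *\<^sub>R g y) has_derivative (\<lambda>h. frechet_derivative f (at x) h - c *\<^sub>R frechet_derivative g (at x) h)) (at x)"
    using assms[unfolded frechet_derivative_works] by (auto intro!: derivative_eq_intros)
  then show ?thesis
    unfolding divg_def using assms[unfolded frechet_derivative_works]
    by (simp add: pdiff_at[where f=f] pdiff_at[where f=g] pdiff_at sum_subtractf sum_distrib_left)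
qed

lemma divg_prod:
  fixes f :: "real^'d \<Rightarrow> real" and g :: "real^'d \<Rightarrow> real^'d"
  assumes "(f has_derivative f') (at x)" "g differentiable at x"
  shows "divg (\<lambda>y. f y *\<^sub>R g y) x = (\<Sum>i\<in>UNIV. f' (axis i 1) * g x $ i) + f x * divg g x"
proof -
  have "((\<lambda>y. f y *\<^sub>R g y) has_derivative (\<lambda>h. f x *\<^sub>R frechet_derivative g (at x) h + f' h *\<^sub>R g x)) (at x)"
    using assms(2)[unfolded frechet_derivative_works] assms(1) by (auto intro!: derivative_eq_intros)
  then show ?thesis
    unfolding divg_def using assms(2)[unfolded frechet_derivative_works]
    by (simp add: pdiff_at[where f=g] pdiff_at sum.distrib sum_distrib_left algebra_simps)
qed

lemma grad_pres_diff:
  fixes rho E :: "real^'d \<Rightarrow> real" and m :: "real^'d \<Rightarrow> real^'d"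
  assumes "\<And>y. rho y \<noteq> 0" "twice_diff rho" "twice_diff m" "twice_diff E"
  shows "grad (pres \<gamma> \<epsilon> rho m E) differentiable at x"
proof -
  have d: "\<And>y. rho differentiable at y" "\<And>y. m differentiable at y" "\<And>y. E differentiable at y"
    and dd: "\<And>v y. (\<lambda>z. frechet_derivative rho (at z) v) differentiable at y"
       "\<And>v y. (\<lambda>z. frechet_derivative m (at z) v) differentiable at y"
       "\<And>v y. (\<lambda>z. frechet_derivative E (at z) v) differentiable at y"
    using assms(2-4) unfolding twice_diff_def by auto
  define F where "F = (\<lambda>y h. (\<gamma>-1)*(frechet_derivative E (at y) h - \<epsilon>\<^sup>2/2*
     ((frechet_derivative m (at y) h \<bullet> m y + m y \<bullet> frechet_derivative m (at y) h) / rho y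
      - (m y \<bullet> m y) * frechet_derivative rho (at y) h / (rho y)\<^sup>2)))"
  have "grad (pres \<gamma> \<epsilon> rho m E) = (\<lambda>y. \<Sum>i\<in>UNIV. F y (axis i 1) *\<^sub>R axis i 1)"
  proof
    fix y
    have "grad (pres \<gamma> \<epsilon> rho m E) y = (\<chi> i. F y (axis i 1))"
      unfolding grad_def F_def using pdiff_at[OF pres_deriv[OF assms(1) d]] by simp
    also have "\<dots> = (\<Sum>i\<in>UNIV. F y (axis i 1) *\<^sub>R axis i 1)"
      using basis_expansion[of "\<chi> i. F y (axis i 1)"] by (simp add: scalar_mult_eq_scaleR)
    finally show "grad (pres \<gamma> \<epsilon> rho m E) y = (\<Sum>i\<in>UNIV. F y (axis i 1) *\<^sub>R axis i 1)" .
  qed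
  moreover have "(\<lambda>y. \<Sum>i\<in>UNIV. F y (axis i 1) *\<^sub>R axis i 1) differentiable at x"
    unfolding F_def using assms(1) d dd
    by (intro differentiable_sum differentiable_scaleR differentiable_const) (auto simp: power2_eq_square)
  ultimately show ?thesis by simp
qed

theorem lemma3p1:
  fixes \<epsilon> \<gamma> dt :: real
    and rho0 rho1 E0 E1 :: "real^'d \<Rightarrow> real"
    and m0 m1 :: "real^'d \<Rightarrow> real^'d"
  assumes "0 < \<epsilon>" "\<epsilon> \<le> 1" "\<gamma> > 1" "dt > 0"
    and "\<forall>x. rho0 x > 0"
    and "\<forall>x. rho_hat dt rho0 m0 x > 0"
    and "twice_diff rho0" "twice_diff m0" "twice_diff E0"
    and "twice_diff rho1" "twice_diff m1" "twice_diff E1"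
  defines "rh \<equiv> rho_hat dt rho0 m0"
    and "mh \<equiv> m_hat \<gamma> \<epsilon> dt rho0 m0 E0"
    and "Eh \<equiv> E_hat \<gamma> \<epsilon> dt rho0 m0 E0"
    and "uh \<equiv> vel (rho_hat dt rho0 m0) (m_hat \<gamma> \<epsilon> dt rho0 m0 E0)"
    and "ph \<equiv> pres \<gamma> \<epsilon> (rho_hat dt rho0 m0) (m_hat \<gamma> \<epsilon> dt rho0 m0 E0) (E_hat \<gamma> \<epsilon> dt rho0 m0 E0)"
    and "p1 \<equiv> pres \<gamma> \<epsilon> rho1 m1 E1"
    and "u1 \<equiv> vel rho1 m1"
  shows "((\<forall>x. rho1 x = rh x)
          \<and> (\<forall>x. m1 x = mh x - ((1 - \<epsilon>\<^sup>2) / \<epsilon>\<^sup>2 * dt) *\<^sub>R grad p1 x)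
          \<and> (\<forall>x. E1 x = Eh x - (1 - \<epsilon>\<^sup>2) * dt * divg (\<lambda>y. (p1 y - pinf p1) *\<^sub>R u1 y) x))
     \<longleftrightarrow>
         ((\<forall>x. rho1 x = rh x)
          \<and> (\<forall>x. m1 x = mh x - ((1 - \<epsilon>\<^sup>2) / \<epsilon>\<^sup>2 * dt) *\<^sub>R grad p1 x)
          \<and> (\<forall>x. - ((1 - \<epsilon>\<^sup>2)\<^sup>2 / \<epsilon>\<^sup>2) * dt\<^sup>2
                    * divg (\<lambda>y. ((p1 y - pinf p1) / rh y) *\<^sub>R grad p1 y) x
                  + p1 x / (\<gamma> - 1)
                = - ((1 - \<epsilon>\<^sup>2)\<^sup>2 / (2 * \<epsilon>\<^sup>2)) * (dt\<^sup>2 / rh x) * (norm (grad p1 x))\<^sup>2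
                  - (1 - \<epsilon>\<^sup>2) * dt * (p1 x - pinf p1) * divg uh x
                  + ph x / (\<gamma> - 1)))"
proof -
  define c where "c = (1 - \<epsilon>\<^sup>2) / \<epsilon>\<^sup>2 * dt"
  define P where "P = pinf p1"
  have key: "E1 x = Eh x - (1 - \<epsilon>\<^sup>2) * dt * divg (\<lambda>y. (p1 y - pinf p1) *\<^sub>R u1 y) x
     \<longleftrightarrow> - ((1 - \<epsilon>\<^sup>2)\<^sup>2 / \<epsilon>\<^sup>2) * dt\<^sup>2
                    * divg (\<lambda>y. ((p1 y - pinf p1) / rh y) *\<^sub>R grad p1 y) x
                  + p1 x / (\<gamma> - 1)
                = - ((1 - \<epsilon>\<^sup>2)\<^sup>2 / (2 * \<epsilon>\<^sup>2)) * (dt\<^sup>2 / rh x) * (norm (grad p1 x))\<^sup>2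
                  - (1 - \<epsilon>\<^sup>2) * dt * (p1 x - pinf p1) * divg uh x
                  + ph x / (\<gamma> - 1)"
    if A: "\<forall>x. rho1 x = rh x" and B: "\<forall>x. m1 x = mh x - c *\<^sub>R grad p1 x" for x
  proof -
    have rpos: "\<And>y. rh y > 0" using assms(6) rh_def by simp
    have r1: "rho1 = rh" using A by auto
    have rnz: "\<And>y. rho1 y \<noteq> 0" using rpos r1 by (metis less_irrefl)
    have d: "\<And>y. rho1 differentiable at y" "\<And>y. m1 differentiable at y" "\<And>y. E1 differentiable at y"
      using assms(10-12) unfolding twice_diff_def by auto
    have pd: "\<And>y. p1 differentiable at y"
      unfolding p1_def using pres_deriv[OF rnz d] by (rule differentiableI)
    define Dp where "Dp = (\<lambda>y. frechet_derivative p1 (at y))"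
    have Dp: "\<And>y. (p1 has_derivative Dp y) (at y)"
      unfolding Dp_def using pd frechet_derivative_works by blast
    have gp: "\<And>y. grad p1 differentiable at y"
      unfolding p1_def by (rule grad_pres_diff[OF rnz assms(10-12)])
    have uh_eq: "uh = (\<lambda>y. (1 / rho1 y) *\<^sub>R (m1 y + c *\<^sub>R grad p1 y))"
      using B r1 unfolding uh_def vel_def mh_def rh_def by (auto simp: fun_eq_iff)
    have uhd: "uh differentiable at y" for y
      unfolding uh_eq using rnz d gp by (intro derivative_intros) auto
    have u1_eq: "u1 y = uh y - (c / rh y) *\<^sub>R grad p1 y" for y
    proof -
      have "u1 y = (1/rh y) *\<^sub>R (mh y - c *\<^sub>R grad p1 y)" using B r1 unfolding u1_def vel_def by simp
      also have "\<dots> = uh y - (c/rh y) *\<^sub>R grad p1 y"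
        unfolding uh_def vel_def mh_def rh_def by (simp add: scaleR_diff_right)
      finally show ?thesis .
    qed
    have fe: "(\<lambda>y. (p1 y - P) *\<^sub>R u1 y) = (\<lambda>y. (p1 y - P) *\<^sub>R uh y - c *\<^sub>R (((p1 y - P) / rh y) *\<^sub>R grad p1 y))"
      by (simp add: fun_eq_iff u1_eq scaleR_diff_right scaleR_scaleR mult.commute)
    have dv: "divg (\<lambda>y. (p1 y - P) *\<^sub>R u1 y) x
       = grad p1 x \<bullet> uh x + (p1 x - P) * divg uh x - c * divg (\<lambda>y. ((p1 y - P) / rh y) *\<^sub>R grad p1 y) x"
    proof -
      have "divg (\<lambda>y. (p1 y - P) *\<^sub>R u1 y) x = divg (\<lambda>y. (p1 y - P) *\<^sub>R uh y) x - c * divg (\<lambda>y. ((p1 y - P) / rh y) *\<^sub>R grad p1 y) x"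
        unfolding fe
        apply (rule divg_lin)
        using pd uhd gp rnz d unfolding r1[symmetric] by (auto intro!: derivative_intros)
      moreover have "((\<lambda>y. p1 y - P) has_derivative Dp x) (at x)"
        using Dp[of x] by (auto intro!: derivative_eq_intros)
      then have "divg (\<lambda>y. (p1 y - P) *\<^sub>R uh y) x = (\<Sum>i\<in>UNIV. Dp x (axis i 1) * uh x $ i) + (p1 x - P) * divg uh x"
        using divg_prod uhd by blast
      moreover have "(\<Sum>i\<in>UNIV. Dp x (axis i 1) * uh x $ i) = grad p1 x \<bullet> uh x"
        unfolding inner_vec_def grad_def using pdiff_at[OF Dp[of x]] by simp
      ultimately show ?thesis by simp
    qed
    have Ep: "E1 x = p1 x / (\<gamma> - 1) + \<epsilon>\<^sup>2/2 * rh x * (norm (u1 x))\<^sup>2"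
      using assms(3) r1 unfolding p1_def pres_def u1_def by (simp add: field_simps)
    have Eph: "Eh x = ph x / (\<gamma> - 1) + \<epsilon>\<^sup>2/2 * rh x * (norm (uh x))\<^sup>2"
      using assms(3) unfolding ph_def pres_def uh_def Eh_def rh_def by (simp add: field_simps)
    have nu: "(norm (u1 x))\<^sup>2 = (norm (uh x))\<^sup>2 - 2 * (c / rh x) * (grad p1 x \<bullet> uh x) + (c / rh x)\<^sup>2 * (norm (grad p1 x))\<^sup>2"
      unfolding u1_eq power2_norm_eq_inner
      by (simp add: inner_diff_left inner_diff_right inner_commute algebra_simps power2_eq_square)
    define a where "a = grad p1 x \<bullet> uh x"
    define G where "G = (norm (grad p1 x))\<^sup>2"
    define Dv where "Dv = divg (\<lambda>y. ((p1 y - P) / rh y) *\<^sub>R grad p1 y) x"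
    have "(E1 x - (Eh x - (1 - \<epsilon>\<^sup>2) * dt * divg (\<lambda>y. (p1 y - P) *\<^sub>R u1 y) x))
       = (- ((1 - \<epsilon>\<^sup>2)\<^sup>2 / \<epsilon>\<^sup>2) * dt\<^sup>2 * Dv + p1 x / (\<gamma> - 1))
        - (- ((1 - \<epsilon>\<^sup>2)\<^sup>2 / (2 * \<epsilon>\<^sup>2)) * (dt\<^sup>2 / rh x) * G
                  - (1 - \<epsilon>\<^sup>2) * dt * (p1 x - P) * divg uh x
                  + ph x / (\<gamma> - 1))"
      unfolding Ep Eph nu dv a_def[symmetric] G_def[symmetric] Dv_def[symmetric] c_def
      using rpos[of x] assms(1) by (simp add: field_simps power2_eq_square)
    then show ?thesis unfolding Dv_def G_def P_def by linarith
  qed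
  show ?thesis
    using key unfolding c_def by blast
qed

end
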